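(* Let $(X_n)_{n\ge0}$ be an ergodic discrete-time Markov chain on a finite state space $\mathcal S$ with transition probabilities $p_{xy}$ and stationary distribution $\pi$, and let $0\in\mathcal S$ be one of its states. Suppose there is a non-negative function $f:\mathcal S\to\mathbb R$ and constants $\varepsilon>0$, $c_0>0$, $C>0$ such that \[ f(0)=0,\qquad \max_{x\in\mathcal S:\ p_{0x}>0}f(x)=c_0,\qquad |f(X_{n+1})-f(X_n)|\le C, \] \[ \mathbb E\big(f(X_{n+1})-f(X_n)\mid X_n=x\big)<-\varepsilon\quad\text{for all }x\ne0. \] Then there are $c_1,c_2>0$ depending only on $c_0,C,\varepsilon$ such that for all $k>0$, \[ \pi(A_k)\le c_1e^{-c_2k},\qquad\text{where }A_k=\{x\in\mathcal S: f(x)>k\}. \] *)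

theory Defs
  imports Complex_Main
begin

definition stochastic :: "nat set \<Rightarrow> (nat \<Rightarrow> nat \<Rightarrow> real) \<Rightarrow> bool" where
  "stochastic S P \<longleftrightarrow> finite S \<and> S \<noteq> {} \<and>
     (\<forall>x\<in>S. \<forall>y\<in>S. P x y \<ge> 0) \<and> (\<forall>x\<in>S. (\<Sum>y\<in>S. P x y) = 1)"

fun mpow :: "nat set \<Rightarrow> (nat \<Rightarrow> nat \<Rightarrow> real) \<Rightarrow> nat \<Rightarrow> nat \<Rightarrow> nat \<Rightarrow> real" where
  "mpow S P 0 x y = (if x = y then 1 else 0)"
| "mpow S P (Suc n) x y = (\<Sum>z\<in>S. mpow S P n x z * P z y)"

definition irreducible_chain :: "nat set \<Rightarrow> (nat \<Rightarrow> nat \<Rightarrow> real) \<Rightarrow> bool" where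
  "irreducible_chain S P \<longleftrightarrow> (\<forall>x\<in>S. \<forall>y\<in>S. \<exists>n. mpow S P n x y > 0)"

definition period :: "nat set \<Rightarrow> (nat \<Rightarrow> nat \<Rightarrow> real) \<Rightarrow> nat \<Rightarrow> nat" where
  "period S P x = Gcd {n. n \<ge> 1 \<and> mpow S P n x x > 0}"

definition aperiodic_chain :: "nat set \<Rightarrow> (nat \<Rightarrow> nat \<Rightarrow> real) \<Rightarrow> bool" where
  "aperiodic_chain S P \<longleftrightarrow> (\<forall>x\<in>S. period S P x = 1)"

definition ergodic_chain :: "nat set \<Rightarrow> (nat \<Rightarrow> nat \<Rightarrow> real) \<Rightarrow> bool" where
  "ergodic_chain S P \<longleftrightarrow> stochastic S P \<and> irreducible_chain S P \<and> aperiodic_chain S P"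

definition stationary_dist :: "nat set \<Rightarrow> (nat \<Rightarrow> nat \<Rightarrow> real) \<Rightarrow> (nat \<Rightarrow> real) \<Rightarrow> bool" where
  "stationary_dist S P \<pi> \<longleftrightarrow> (\<forall>x\<in>S. \<pi> x \<ge> 0) \<and> (\<Sum>x\<in>S. \<pi> x) = 1 \<and>
     (\<forall>y\<in>S. \<pi> y = (\<Sum>x\<in>S. \<pi> x * P x y))"

end

theory Submission
  imports Defs
begin

lemma exp_quad_bound:
  fixes t :: real
  assumes "\<bar>t\<bar> \<le> 1"
  shows "exp t \<le> 1 + t + t\<^sup>2"
proof (cases "t \<ge> 0")
  case True
  then show ?thesis using exp_bound[of t] assms by auto
next
  case False
  define s where "s = - t"
  have s0: "0 \<le> s" "s \<le> 1" using False assms s_def by auto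
  have "1 + s \<le> exp s" by (rule exp_ge_add_one_self)
  hence "exp (-s) \<le> 1 / (1 + s)"
    using s0 by (simp add: exp_minus field_simps)
  also have "\<dots> \<le> 1 - s + s\<^sup>2"
    using s0 by (simp add: field_simps power2_eq_square)
  finally show ?thesis using s_def by simp
qed

theorem lemma2:
  fixes c0 C \<epsilon> :: real
  assumes "\<epsilon> > 0" and "c0 > 0" and "C > 0"
  shows "\<exists>c1 c2 :: real. c1 > 0 \<and> c2 > 0 \<and>
    (\<forall>(S :: nat set) (P :: nat \<Rightarrow> nat \<Rightarrow> real) (\<pi> :: nat \<Rightarrow> real) (f :: nat \<Rightarrow> real) (z0 :: nat).
       ergodic_chain S P \<longrightarrow> stationary_dist S P \<pi> \<longrightarrow> z0 \<in> S \<longrightarrow>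
       (\<forall>x\<in>S. f x \<ge> 0) \<longrightarrow> f z0 = 0 \<longrightarrow>
       Max {f x | x. x \<in> S \<and> P z0 x > 0} = c0 \<longrightarrow>
       (\<forall>x\<in>S. \<forall>y\<in>S. P x y > 0 \<longrightarrow> \<bar>f y - f x\<bar> \<le> C) \<longrightarrow>
       (\<forall>x\<in>S. x \<noteq> z0 \<longrightarrow> (\<Sum>y\<in>S. P x y * (f y - f x)) < - \<epsilon>) \<longrightarrow>
       (\<forall>k::real. k > 0 \<longrightarrow> (\<Sum>x\<in>{x\<in>S. f x > k}. \<pi> x) \<le> c1 * exp (- c2 * k)))"
proof -
  define l where "l = min (min (1 / C) (\<epsilon> / (2 * C\<^sup>2))) (1 / \<epsilon>)"
  have l0: "l > 0" using assms by (simp add: l_def)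
  have "l \<le> 1 / C" by (simp add: l_def)
  hence lC: "l * C \<le> 1" using assms by (simp add: pos_le_divide_eq)
  have "l \<le> \<epsilon> / (2 * C\<^sup>2)" by (simp add: l_def)
  hence lC2: "l * C\<^sup>2 \<le> \<epsilon> / 2" using assms by (simp add: pos_le_divide_eq field_simps)
  define \<rho> where "\<rho> = 1 - l * \<epsilon> / 2"
  have "l \<le> 1 / \<epsilon>" by (simp add: l_def)
  hence le: "l * \<epsilon> \<le> 1" using assms by (simp add: pos_le_divide_eq)
  have \<rho>0: "\<rho> \<ge> 0" using le by (simp add: \<rho>_def)
  define c1 where "c1 = exp (l * c0) / (l * \<epsilon> / 2)"
  have c10: "c1 > 0" using l0 assms by (simp add: c1_def)
  show ?thesis
  proof (intro exI conjI allI impI)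
    show "c1 > 0" by (rule c10)
    show "l > 0" by (rule l0)
    fix S P \<pi> f z0 and k :: real
    assume erg: "ergodic_chain S P" and st: "stationary_dist S P \<pi>" and z0: "z0 \<in> S"
      and fnn: "\<forall>x\<in>S. f x \<ge> 0" and fz0: "f z0 = 0"
      and mx: "Max {f x | x. x \<in> S \<and> P z0 x > 0} = c0"
      and jump: "\<forall>x\<in>S. \<forall>y\<in>S. P x y > 0 \<longrightarrow> \<bar>f y - f x\<bar> \<le> C"
      and drift: "\<forall>x\<in>S. x \<noteq> z0 \<longrightarrow> (\<Sum>y\<in>S. P x y * (f y - f x)) < - \<epsilon>"
      and k0: "k > 0"
    have fin: "finite S" and Pnn: "\<And>x y. x \<in> S \<Longrightarrow> y \<in> S \<Longrightarrow> P x y \<ge> 0"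
      and Prow: "\<And>x. x \<in> S \<Longrightarrow> (\<Sum>y\<in>S. P x y) = 1"
      using erg by (auto simp: ergodic_chain_def stochastic_def)
    have pinn: "\<And>x. x \<in> S \<Longrightarrow> \<pi> x \<ge> 0" and pisum: "(\<Sum>x\<in>S. \<pi> x) = 1"
      and pist: "\<And>y. y \<in> S \<Longrightarrow> \<pi> y = (\<Sum>x\<in>S. \<pi> x * P x y)"
      using st by (auto simp: stationary_dist_def)
    define V where "V x = exp (l * f x)" for x
    have Vpos: "\<And>x. V x > 0" by (simp add: V_def)
    have dV: "(\<Sum>y\<in>S. P x y * V y) \<le> \<rho> * V x + (if x = z0 then exp (l * c0) else 0)"
      if xS: "x \<in> S" for x
    proof (cases "x = z0")
      case True
      have finset: "finite {f x | x. x \<in> S \<and> P z0 x > 0}" using fin by simp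
      have "(\<Sum>y\<in>S. P x y * V y) \<le> (\<Sum>y\<in>S. P x y * exp (l * c0))"
      proof (rule sum_mono)
        fix y assume yS: "y \<in> S"
        show "P x y * V y \<le> P x y * exp (l * c0)"
        proof (cases "P x y > 0")
          case True
          hence "f y \<in> {f x | x. x \<in> S \<and> P z0 x > 0}" using yS \<open>x = z0\<close> by blast
          hence "f y \<le> c0" using Max_ge[OF finset] mx by simp
          hence "V y \<le> exp (l * c0)" using l0 by (simp add: V_def mult_left_mono)
          then show ?thesis using True by simp
        next
          case False
          hence "P x y = 0" using Pnn[OF xS yS] by simp
          then show ?thesis by simp
        qed
      qed
      also have "\<dots> = exp (l * c0)" using Prow[OF xS] by (simp add: sum_distrib_right[symmetric])
      finally have "(\<Sum>y\<in>S. P x y * V y) \<le> exp (l * c0)" .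
      moreover have "0 \<le> \<rho> * V x" using \<rho>0 Vpos[of x] by simp
      ultimately show ?thesis using True by simp
    next
      case False
      have "(\<Sum>y\<in>S. P x y * V y) = V x * (\<Sum>y\<in>S. P x y * exp (l * (f y - f x)))"
        unfolding sum_distrib_left
      proof (rule sum.cong)
        fix y
        have "V y = V x * exp (l * (f y - f x))"
          by (simp add: V_def right_diff_distrib exp_diff)
        thus "P x y * V y = V x * (P x y * exp (l * (f y - f x)))" by simp
      qed simp
      also have "(\<Sum>y\<in>S. P x y * exp (l * (f y - f x)))
          \<le> (\<Sum>y\<in>S. P x y * (1 + l * (f y - f x) + l\<^sup>2 * C\<^sup>2))"
      proof (rule sum_mono)
        fix y assume yS: "y \<in> S"
        show "P x y * exp (l * (f y - f x)) \<le> P x y * (1 + l * (f y - f x) + l\<^sup>2 * C\<^sup>2)"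
        proof (cases "P x y > 0")
          case True
          hence j: "\<bar>f y - f x\<bar> \<le> C" using jump xS yS by blast
          hence "\<bar>l * (f y - f x)\<bar> \<le> l * C" using l0 by (simp add: abs_mult mult_left_mono)
          hence a1: "\<bar>l * (f y - f x)\<bar> \<le> 1" using lC by linarith
          have "(l * (f y - f x))\<^sup>2 \<le> (l * C)\<^sup>2"
          proof -
            have "\<bar>l * (f y - f x)\<bar>\<^sup>2 \<le> (l * C)\<^sup>2"
              by (rule power_mono[OF \<open>\<bar>l * (f y - f x)\<bar> \<le> l * C\<close>]) simp
            thus ?thesis by simp
          qed
          hence "exp (l * (f y - f x)) \<le> 1 + l * (f y - f x) + l\<^sup>2 * C\<^sup>2"
            using exp_quad_bound[OF a1] by (simp add: power_mult_distrib)
          then show ?thesis using True by (simp add: mult_left_mono)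
        next
          case False
          hence "P x y = 0" using Pnn[OF xS yS] by simp
          then show ?thesis by simp
        qed
      qed
      also have "\<dots> = (\<Sum>y\<in>S. P x y * (1 + l\<^sup>2 * C\<^sup>2) + l * (P x y * (f y - f x)))"
        by (intro sum.cong) (simp_all add: algebra_simps)
      also have "\<dots> = (\<Sum>y\<in>S. P x y) * (1 + l\<^sup>2 * C\<^sup>2) + l * (\<Sum>y\<in>S. P x y * (f y - f x))"
        by (simp add: sum.distrib sum_distrib_left sum_distrib_right)
      also have "\<dots> \<le> 1 + l\<^sup>2 * C\<^sup>2 - l * \<epsilon>"
      proof -
        have "(\<Sum>y\<in>S. P x y * (f y - f x)) \<le> - \<epsilon>" using drift xS False by force
        hence "l * (\<Sum>y\<in>S. P x y * (f y - f x)) \<le> l * (- \<epsilon>)"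
          by (rule mult_left_mono) (use l0 in simp)
        thus ?thesis using Prow[OF xS] by simp
      qed
      also have "\<dots> \<le> \<rho>"
      proof -
        have "l\<^sup>2 * C\<^sup>2 = l * (l * C\<^sup>2)" by (simp add: power2_eq_square)
        also have "\<dots> \<le> l * (\<epsilon> / 2)" using lC2 l0 by (simp add: mult_left_mono)
        finally show ?thesis by (simp add: \<rho>_def)
      qed
      finally show ?thesis using False Vpos[of x]
        by (simp add: mult_left_mono mult.commute)
    qed
    define T where "T = (\<Sum>x\<in>S. \<pi> x * V x)"
    have "T = (\<Sum>y\<in>S. (\<Sum>x\<in>S. \<pi> x * P x y) * V y)"
      unfolding T_def using pist by (intro sum.cong) auto
    also have "\<dots> = (\<Sum>x\<in>S. \<pi> x * (\<Sum>y\<in>S. P x y * V y))"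
      unfolding sum_distrib_left sum_distrib_right
      by (subst sum.swap) (simp add: mult.assoc)
    also have "\<dots> \<le> (\<Sum>x\<in>S. \<pi> x * (\<rho> * V x + (if x = z0 then exp (l * c0) else 0)))"
      using dV pinn by (intro sum_mono mult_left_mono) auto
    also have "\<dots> = (\<Sum>x\<in>S. \<rho> * (\<pi> x * V x) + (if x = z0 then \<pi> x * exp (l * c0) else 0))"
      by (intro sum.cong) (simp_all add: distrib_left)
    also have "\<dots> = \<rho> * T + (\<Sum>x\<in>S. (if x = z0 then \<pi> x * exp (l * c0) else 0))"
      by (simp add: sum.distrib sum_distrib_left T_def)
    also have "\<dots> = \<rho> * T + \<pi> z0 * exp (l * c0)"
      using fin z0 by (simp add: sum.delta)
    also have "\<dots> \<le> \<rho> * T + exp (l * c0)"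
    proof -
      have "\<pi> z0 \<le> 1" using pisum member_le_sum[of z0 S \<pi>] pinn z0 fin by auto
      thus ?thesis by (simp add: mult_left_le_one_le)
    qed
    finally have "T \<le> \<rho> * T + exp (l * c0)" .
    hence "(l * \<epsilon> / 2) * T \<le> exp (l * c0)" by (simp add: \<rho>_def algebra_simps)
    hence Tb: "T \<le> c1" unfolding c1_def using l0 assms by (simp add: pos_le_divide_eq mult.commute)
    have "(\<Sum>x\<in>{x\<in>S. f x > k}. \<pi> x) \<le> (\<Sum>x\<in>{x\<in>S. f x > k}. \<pi> x * V x * exp (- l * k))"
    proof (rule sum_mono)
      fix x assume "x \<in> {x\<in>S. f x > k}"
      hence xS: "x \<in> S" and fk: "f x > k" by auto
      have e: "V x * exp (- l * k) = exp (l * (f x - k))"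
        by (simp add: V_def mult_exp_exp right_diff_distrib)
      have "0 \<le> l * (f x - k)" using fk l0 by simp
      hence "1 \<le> exp (l * (f x - k))" using exp_ge_add_one_self[of "l * (f x - k)"] by linarith
      hence "1 \<le> V x * exp (- l * k)" using e by simp
      thus "\<pi> x \<le> \<pi> x * V x * exp (- l * k)"
      proof -
        have "\<pi> x * 1 \<le> \<pi> x * (V x * exp (- l * k))"
          by (rule mult_left_mono[OF \<open>1 \<le> V x * exp (- l * k)\<close> pinn[OF xS]])
        thus ?thesis by (simp add: mult.assoc)
      qed
    qed
    also have "\<dots> = (\<Sum>x\<in>{x\<in>S. f x > k}. \<pi> x * V x) * exp (- l * k)"
      by (simp add: sum_distrib_right)
    also have "\<dots> \<le> T * exp (- l * k)"
      unfolding T_def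
    proof (rule mult_right_mono)
      show "(\<Sum>x\<in>{x\<in>S. f x > k}. \<pi> x * V x) \<le> (\<Sum>x\<in>S. \<pi> x * V x)"
        by (rule sum_mono2[OF fin]) (auto intro!: mult_nonneg_nonneg pinn less_imp_le[OF Vpos])
    qed simp
    also have "\<dots> \<le> c1 * exp (- l * k)" using Tb by simp
    finally show "(\<Sum>x\<in>{x\<in>S. f x > k}. \<pi> x) \<le> c1 * exp (- l * k)" .
  qed
qed

end
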